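(* Let $k$ and $a_n$ be integers with $a_n\ge k-1\ge 2$, and let $n=a_nk$. Then $src^*(C_n(\{1,k\}))=rc^*(C_n(\{1,k\}))=a_n+k-2$.
   Context: For $n\ge 2$ and $S\subseteq\{1,\dots,n-1\}$, the circulant digraph $C_n(S)$ has vertex set $\{v_0,\dots,v_{n-1}\}$ and arcs $v_iv_j$ for all $i,j$ with $j-i\equiv s \pmod n$ for some $s\in S$. For a strongly connected digraph $D$ and an arc-colouring $\Gamma:A(D)\to\{1,\dots,k\}$, a directed path is rainbow if its arcs have pairwise distinct colours. $\Gamma$ is rainbow connected if for every ordered pair of distinct vertices $x,y$ there is a rainbow directed $xy$-path; $rc^*(D)$ is the minimum number of colours of such a colouring. $\Gamma$ is strongly rainbow connected if for every ordered pair of distinct vertices $x,y$ there is a rainbow directed $xy$-path of length $d_D(x,y)$; $src^*(D)$ is the minimum such number. *)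

theory Defs
  imports Main
begin

definition circulant_arcs :: "nat \<Rightarrow> nat set \<Rightarrow> (nat \<times> nat) set" where
  "circulant_arcs n S = {(i, j). i < n \<and> j < n \<and>
      (\<exists>s\<in>S. (int j - int i) mod int n = int s mod int n)}"

definition circulant_verts :: "nat \<Rightarrow> nat set" where
  "circulant_verts n = {..<n}"

definition path_arcs :: "nat list \<Rightarrow> (nat \<times> nat) list" where
  "path_arcs p = zip p (tl p)"

definition is_dipath :: "(nat \<times> nat) set \<Rightarrow> nat list \<Rightarrow> nat \<Rightarrow> nat \<Rightarrow> bool" where
  "is_dipath A p x y \<longleftrightarrow> p \<noteq> [] \<and> hd p = x \<and> last p = y \<and> distinct p \<and>
      set (path_arcs p) \<subseteq> A"

definition dist_di :: "(nat \<times> nat) set \<Rightarrow> nat \<Rightarrow> nat \<Rightarrow> nat" where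
  "dist_di A x y = (LEAST l. \<exists>p. is_dipath A p x y \<and> length p - 1 = l)"

definition rainbow :: "((nat \<times> nat) \<Rightarrow> nat) \<Rightarrow> nat list \<Rightarrow> bool" where
  "rainbow \<Gamma> p \<longleftrightarrow> distinct (map \<Gamma> (path_arcs p))"

definition is_colouring :: "(nat \<times> nat) set \<Rightarrow> nat \<Rightarrow> ((nat \<times> nat) \<Rightarrow> nat) \<Rightarrow> bool" where
  "is_colouring A k \<Gamma> \<longleftrightarrow> (\<forall>a\<in>A. \<Gamma> a \<in> {1..k})"

definition rainbow_connected ::
  "nat set \<Rightarrow> (nat \<times> nat) set \<Rightarrow> ((nat \<times> nat) \<Rightarrow> nat) \<Rightarrow> bool" where
  "rainbow_connected V A \<Gamma> \<longleftrightarrow>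
     (\<forall>x\<in>V. \<forall>y\<in>V. x \<noteq> y \<longrightarrow> (\<exists>p. is_dipath A p x y \<and> rainbow \<Gamma> p))"

definition strongly_rainbow_connected ::
  "nat set \<Rightarrow> (nat \<times> nat) set \<Rightarrow> ((nat \<times> nat) \<Rightarrow> nat) \<Rightarrow> bool" where
  "strongly_rainbow_connected V A \<Gamma> \<longleftrightarrow>
     (\<forall>x\<in>V. \<forall>y\<in>V. x \<noteq> y \<longrightarrow>
        (\<exists>p. is_dipath A p x y \<and> length p - 1 = dist_di A x y \<and> rainbow \<Gamma> p))"

definition rc_star :: "nat set \<Rightarrow> (nat \<times> nat) set \<Rightarrow> nat" where
  "rc_star V A = (LEAST k. \<exists>\<Gamma>. is_colouring A k \<Gamma> \<and> rainbow_connected V A \<Gamma>)"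

definition src_star :: "nat set \<Rightarrow> (nat \<times> nat) set \<Rightarrow> nat" where
  "src_star V A = (LEAST k. \<exists>\<Gamma>. is_colouring A k \<Gamma> \<and> strongly_rainbow_connected V A \<Gamma>)"

end

theory Submission
  imports Defs
begin


lemma arcs_iff:
  assumes "1 < k" "k < n"
  shows "(i, j) \<in> circulant_arcs n {1, k} \<longleftrightarrow> i < n \<and> (j = (i+1) mod n \<or> j = (i+k) mod n)"
proof -
  have key: "j < n \<Longrightarrow> (int j - int i) mod int n = int s mod int n \<longleftrightarrow> j = (i+s) mod n" for s
  proof -
    assume jn: "j < n"
    have "(int j - int i) mod int n = int s mod int n \<longleftrightarrow> int j mod int n = (int i + int s) mod int n"
      by (metis add_diff_cancel_left' diff_add_cancel mod_add_left_eq mod_diff_left_eq)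
    also have "\<dots> \<longleftrightarrow> int j = int ((i+s) mod n)"
      using jn by (simp add: zmod_int)
    finally show ?thesis by simp
  qed
  have n0: "0 < n" using assms by simp
  have k1: "int 1 mod int n = int 1" "int k mod int n = int k" using assms by auto
  have "(i, j) \<in> circulant_arcs n {1, k} \<longleftrightarrow> i < n \<and> j < n \<and>
     ((int j - int i) mod int n = int 1 mod int n \<or> (int j - int i) mod int n = int k mod int n)"
    unfolding circulant_arcs_def by auto
  also have "\<dots> \<longleftrightarrow> i < n \<and> j < n \<and> (j = (i+1) mod n \<or> j = (i+k) mod n)"
    using key by blast
  also have "\<dots> \<longleftrightarrow> i < n \<and> (j = (i+1) mod n \<or> j = (i+k) mod n)"
    using n0 by auto
  finally show ?thesis .
qed



lemma path_arcs_Cons: "path_arcs (x # xs) = (if xs = [] then [] else (x, hd xs) # path_arcs xs)"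
  by (cases xs) (auto simp: path_arcs_def)

lemma path_arcs_Nil: "path_arcs [] = []" by (simp add: path_arcs_def)

locale circ =
  fixes k a :: nat
  assumes k3: "3 \<le> k" and a2: "2 \<le> a"
begin

abbreviation n where "n \<equiv> a * k"

definition AA where "AA = circulant_arcs n {1, k}"

lemma kn: "1 < k" "k < n" "0 < n" "0 < k" "0 < a"
proof -
  show "1 < k" "0 < k" "0 < a" using k3 a2 by auto
  have "2 * k \<le> a * k" using a2 by simp
  then show "k < n" using k3 by simp
  then show "0 < n" by simp
qed

lemma arcs: "(i, j) \<in> AA \<longleftrightarrow> i < n \<and> (j = (i+1) mod n \<or> j = (i+k) mod n)"
  unfolding AA_def using arcs_iff kn by blast

lemma path_steps:
  "set (path_arcs p) \<subseteq> AA \<Longrightarrow> p \<noteq> [] \<Longrightarrow> hd p < n \<Longrightarrow>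
     \<exists>x y. x + y = length p - 1 \<and> last p = (hd p + x + y*k) mod n"
proof (induction p)
  case Nil then show ?case by simp
next
  case (Cons v rest)
  show ?case
  proof (cases rest)
    case Nil
    then show ?thesis using Cons.prems by auto
  next
    case (Cons w rest')
    have arc: "(v, w) \<in> AA" and sub: "set (path_arcs rest) \<subseteq> AA"
      using Cons.prems(1) Cons by (auto simp: path_arcs_Cons)
    then have wn: "w < n" and wv: "w = (v+1) mod n \<or> w = (v+k) mod n"
      using arcs kn by auto
    obtain x y where xy: "x + y = length rest - 1" "last rest = (w + x + y*k) mod n"
      using Cons.IH[OF sub] Cons wn by auto
    show ?thesis
    proof (cases "w = (v+1) mod n")
      case True
      have "last (v # rest) = ((v+1) mod n + (x + y*k)) mod n"
        using xy Cons True by (simp add: add.assoc)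
      also have "\<dots> = ((v+1) + (x + y*k)) mod n" by (rule mod_add_left_eq)
      finally have "last (v # rest) = (v + (x+1) + y*k) mod n" by (simp add: add_ac)
      then show ?thesis using xy Cons by (intro exI[of _ "x+1"] exI[of _ y]) auto
    next
      case False
      then have wk: "w = (v+k) mod n" using wv by auto
      have "last (v # rest) = ((v+k) mod n + (x + y*k)) mod n"
        using xy Cons wk by (simp add: add.assoc)
      also have "\<dots> = ((v+k) + (x + y*k)) mod n" by (rule mod_add_left_eq)
      finally have "last (v # rest) = (v + x + (y+1)*k) mod n" by (simp add: add_ac)
      then show ?thesis using xy Cons by (intro exI[of _ x] exI[of _ "y+1"]) auto
    qed
  qed
qed

definition Qof where "Qof u v = ((v + n - u) mod n) div k"
definition Rof where "Rof u v = ((v + n - u) mod n) mod k"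

lemma mod_n_div: "(P mod n) div k = (P div k) mod a"
proof -
  have "P mod n = k * (P div k mod a) + P mod k"
    using mod_mult2_eq[of P k a] by (simp add: mult.commute)
  then show ?thesis using kn by simp
qed

lemma mod_n_mod: "(P mod n) mod k = P mod k"
  by (simp add: mod_mod_cancel)

lemma Qa: "Qof u v < a" unfolding Qof_def using mod_n_div[of "v+n-u"] kn by simp
lemma Rk: "Rof u v < k" unfolding Rof_def using kn by simp

lemma diff_mod:
  assumes "u < n" "v < n" "(u + s) mod n = v"
  shows "(v + n - u) mod n = s mod n"
proof -
  have "int ((v + n - u) mod n) = (int v + int n - int u) mod int n"
    using assms by (simp add: zmod_int of_nat_diff)
  also have "\<dots> = ((int v - int u) + int n) mod int n" by (simp add: algebra_simps)
  also have "\<dots> = (int v - int u) mod int n" by (rule mod_add_self2)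
  also have "int v = (int u + int s) mod int n" using assms(3) by (metis of_nat_add zmod_int)
  also have "((int u + int s) mod int n - int u) mod int n = int s mod int n"
    by (simp add: mod_diff_left_eq)
  finally have h: "int ((v + n - u) mod n) = int s mod int n" .
  show ?thesis by (metis h of_nat_eq_iff zmod_int)
qed

lemma len_lb:
  assumes "u < n" "v < n" "(u + x + y*k) mod n = v"
  shows "Qof u v + Rof u v \<le> x + y"
proof -
  define s where "s = x + y*k"
  have d: "(v + n - u) mod n = s mod n" using diff_mod[of u v s] assms by (simp add: s_def add.assoc)
  have Q: "Qof u v = (s div k) mod a" unfolding Qof_def d by (rule mod_n_div)
  have R: "Rof u v = x mod k" unfolding Rof_def d mod_n_mod s_def by simp
  have "s div k = x div k + y" unfolding s_def using kn by simp
  then have "Qof u v \<le> x div k + y" using Q by simp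
  moreover have "x div k + x mod k \<le> x"
  proof -
    have "x div k \<le> x div k * k" using kn by simp
    then show ?thesis using div_mult_mod_eq[of x k] by linarith
  qed
  ultimately show ?thesis using R by simp
qed

end


fun nR :: "bool list \<Rightarrow> nat" where
  "nR [] = 0" | "nR (m # ms) = (if m then 1 else 0) + nR ms"
fun nD :: "bool list \<Rightarrow> nat" where
  "nD [] = 0" | "nD (m # ms) = (if m then 0 else 1) + nD ms"

lemma nR_app[simp]: "nR (xs @ ys) = nR xs + nR ys" by (induction xs) auto
lemma nD_app[simp]: "nD (xs @ ys) = nD xs + nD ys" by (induction xs) auto
lemma nR_rep[simp]: "nR (replicate t b) = (if b then t else 0)" by (induction t) auto
lemma nD_rep[simp]: "nD (replicate t b) = (if b then 0 else t)" by (induction t) auto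
lemma len_nRD: "length ms = nR ms + nD ms" by (induction ms) auto

context circ
begin

fun wpos :: "nat \<Rightarrow> bool list \<Rightarrow> nat list" where
  "wpos P [] = [P]"
| "wpos P (m # ms) = P # wpos (P + (if m then 1 else k)) ms"

definition vpath where "vpath P ms = map (\<lambda>x. x mod n) (wpos P ms)"

lemma wpos_ne[simp]: "wpos P ms \<noteq> []" by (cases ms) auto
lemma hd_wpos[simp]: "hd (wpos P ms) = P" by (cases ms) auto
lemma last_wpos: "last (wpos P ms) = P + nR ms + nD ms * k"
  by (induction ms arbitrary: P) auto
lemma length_wpos[simp]: "length (wpos P ms) = Suc (length ms)"
  by (induction ms arbitrary: P) auto

lemma set_wpos: "x \<in> set (wpos P ms) \<Longrightarrow> \<exists>t f. x = P + t + f*k \<and> t \<le> nR ms \<and> f \<le> nD ms"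
proof (induction ms arbitrary: P)
  case Nil then show ?case by auto
next
  case (Cons m ms)
  show ?case
  proof (cases "x = P")
    case True then show ?thesis by (intro exI[of _ 0]) auto
  next
    case False
    then have "x \<in> set (wpos (P + (if m then 1 else k)) ms)" using Cons.prems by auto
    from Cons.IH[OF this] obtain t f where tf: "x = P + (if m then 1 else k) + t + f*k"
      "t \<le> nR ms" "f \<le> nD ms" by auto
    show ?thesis
    proof (cases m)
      case True then show ?thesis using tf by (intro exI[of _ "t+1"] exI[of _ f]) auto
    next
      case False then show ?thesis using tf by (intro exI[of _ t] exI[of _ "f+1"]) (auto simp: algebra_simps)
    qed
  qed
qed

lemma set_wpos_Cons:
  assumes "x \<in> set (wpos (P + (if m then 1 else k)) ms)"
  shows "\<exists>t f. x = P + t + f*k \<and> t \<le> nR (m#ms) \<and> f \<le> nD (m#ms) \<and> 0 < t + f"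
proof -
  from set_wpos[OF assms] obtain t f where tf: "x = P + (if m then 1 else k) + t + f*k"
      "t \<le> nR ms" "f \<le> nD ms" by auto
  show ?thesis
  proof (cases m)
    case True then show ?thesis using tf by (intro exI[of _ "t+1"] exI[of _ f]) auto
  next
    case False then show ?thesis using tf by (intro exI[of _ t] exI[of _ "f+1"]) (auto simp: algebra_simps)
  qed
qed

lemma noret: assumes "0 < c" "c < n" shows "(P + c) mod n \<noteq> P mod n"
proof
  assume "(P + c) mod n = P mod n"
  then have "n dvd (P + c - P)" using mod_eq_dvd_iff_nat[of P "P+c" n] by simp
  then have "n dvd c" by simp
  then have "n \<le> c" using assms(1) by (rule dvd_imp_le)
  then show False using assms(2) by linarith
qed

lemma small_off: assumes "t < k" "f < a" shows "t + f*k < n"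
proof -
  have "f * k \<le> (a - 1) * k" using assms by simp
  also have "(a-1)*k + k = n" using kn by (cases a) auto
  finally show ?thesis using assms by linarith
qed

lemma distinct_vpath: "nR ms < k \<Longrightarrow> nD ms < a \<Longrightarrow> distinct (vpath P ms)"
proof (induction ms arbitrary: P)
  case Nil then show ?case by (simp add: vpath_def)
next
  case (Cons m ms)
  have IH: "distinct (vpath (P + (if m then 1 else k)) ms)"
    using Cons by (intro Cons.IH) (auto split: if_splits)
  have "P mod n \<notin> set (vpath (P + (if m then 1 else k)) ms)"
  proof
    assume "P mod n \<in> set (vpath (P + (if m then 1 else k)) ms)"
    then obtain x where x: "x \<in> set (wpos (P + (if m then 1 else k)) ms)" "x mod n = P mod n"
      unfolding vpath_def by auto
    from set_wpos_Cons[OF x(1)] obtain t f where tf: "x = P + t + f*k" "t \<le> nR (m#ms)"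
      "f \<le> nD (m#ms)" "0 < t + f" by auto
    have c: "t + f*k < n" using small_off[of t f] tf Cons.prems by linarith
    have "0 < t + f*k" using tf kn by (cases "f = 0") auto
    with c have "(P + (t + f*k)) mod n \<noteq> P mod n" by (rule noret[rotated])
    then show False using x tf by (simp add: add.assoc)
  qed
  then show ?case using IH by (simp add: vpath_def)
qed

lemma arcs_vpath: "set (path_arcs (vpath P ms)) \<subseteq> AA"
proof (induction ms arbitrary: P)
  case Nil then show ?case by (simp add: vpath_def path_arcs_def)
next
  case (Cons m ms)
  have hd: "hd (vpath (P + (if m then 1 else k)) ms) = (P + (if m then 1 else k)) mod n"
    by (simp add: vpath_def hd_map)
  have ne: "vpath (P + (if m then 1 else k)) ms \<noteq> []" by (simp add: vpath_def)
  have arc: "(P mod n, (P + (if m then 1 else k)) mod n) \<in> AA"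
  proof (cases m)
    case True
    have "(P+1) mod n = (P mod n + 1) mod n" by (rule mod_add_left_eq[symmetric])
    then show ?thesis using True kn unfolding arcs by auto
  next
    case False
    have "(P+k) mod n = (P mod n + k) mod n" by (rule mod_add_left_eq[symmetric])
    then show ?thesis using False kn unfolding arcs by auto
  qed
  have "vpath P (m # ms) = P mod n # vpath (P + (if m then 1 else k)) ms"
    by (simp add: vpath_def)
  then show ?case using Cons.IH[of "P + (if m then 1 else k)"] hd ne arc
    by (simp add: path_arcs_Cons)
qed

lemma QR_eq: "Qof u v * k + Rof u v = (v + n - u) mod n"
  unfolding Qof_def Rof_def by simp

lemma vpath_dipath:
  assumes "u < n" "v < n" "nR ms = Rof u v" "nD ms = Qof u v"
  shows "is_dipath AA (vpath u ms) u v" "length (vpath u ms) - 1 = Qof u v + Rof u v"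
proof -
  have "last (vpath u ms) = (u + Rof u v + Qof u v * k) mod n"
    by (simp add: vpath_def last_map last_wpos assms)
  also have "\<dots> = (u + (v + n - u) mod n) mod n" using QR_eq[of u v] by (simp add: add.assoc add.commute)
  also have "\<dots> = (u + (v + n - u)) mod n" by (simp add: mod_add_right_eq)
  also have "u + (v + n - u) = v + n" using assms by simp
  finally have last: "last (vpath u ms) = v" using assms by simp
  have "distinct (vpath u ms)" using distinct_vpath assms Qa Rk by simp
  then show "is_dipath AA (vpath u ms) u v" unfolding is_dipath_def
    using last arcs_vpath assms by (simp add: vpath_def hd_map)
  show "length (vpath u ms) - 1 = Qof u v + Rof u v"
    by (simp add: vpath_def len_nRD assms)
qed

lemma dipath_lb:
  assumes "is_dipath AA p u v" "u < n"
  shows "Qof u v + Rof u v \<le> length p - 1"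
proof -
  have p: "p \<noteq> []" "hd p = u" "last p = v" "set (path_arcs p) \<subseteq> AA"
    using assms unfolding is_dipath_def by auto
  obtain x y where xy: "x + y = length p - 1" "last p = (hd p + x + y*k) mod n"
    using path_steps[OF p(4) p(1)] p(2) assms(2) by blast
  then have v: "(u + x + y*k) mod n = v" using p by simp
  have vn: "v < n" using v[symmetric] kn(3) by simp
  have "Qof u v + Rof u v \<le> x + y" by (rule len_lb[OF assms(2) vn v])
  then show ?thesis using xy(1) by simp
qed

lemma dist_eq:
  assumes "u < n" "v < n"
  shows "dist_di AA u v = Qof u v + Rof u v"
proof -
  define ms where "ms = replicate (Rof u v) True @ replicate (Qof u v) False"
  have ex: "is_dipath AA (vpath u ms) u v" "length (vpath u ms) - 1 = Qof u v + Rof u v"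
    using vpath_dipath[of u v ms] assms by (auto simp: ms_def)
  show ?thesis unfolding dist_di_def
  proof (rule Least_equality)
    show "\<exists>p. is_dipath AA p u v \<and> length p - 1 = Qof u v + Rof u v" using ex by blast
  next
    fix l assume "\<exists>p. is_dipath AA p u v \<and> length p - 1 = l"
    then obtain p where "is_dipath AA p u v" "length p - 1 = l" by blast
    then show "Qof u v + Rof u v \<le> l" using dipath_lb[of p u v] assms(1) by simp
  qed
qed

end


context circ
begin

definition Gam :: "(nat \<Rightarrow> nat \<Rightarrow> nat) \<Rightarrow> nat \<times> nat \<Rightarrow> nat" where
  "Gam c = (\<lambda>(i,j). if j = (i+1) mod n then c (i div k) (i mod k) else i div k + 1)"

fun cl :: "(nat \<Rightarrow> nat \<Rightarrow> nat) \<Rightarrow> nat \<Rightarrow> bool list \<Rightarrow> nat list" where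
  "cl c P [] = []"
| "cl c P (m # ms) = (if m then c ((P div k) mod a) (P mod k) else (P div k) mod a + 1)
      # cl c (P + (if m then 1 else k)) ms"

lemma down_ne: "(P+k) mod n \<noteq> (P mod n + 1) mod n"
proof -
  have e1: "(P mod n + 1) mod n = (P+1) mod n" by (rule mod_add_left_eq)
  have "0 < k - 1" "k - 1 < n" using kn(1,2) by linarith+
  then have "((P+1) + (k-1)) mod n \<noteq> (P+1) mod n" by (rule noret)
  moreover have "(P+1) + (k-1) = P + k" using kn by simp
  ultimately show ?thesis using e1 by simp
qed

lemma colours_vpath: "map (Gam c) (path_arcs (vpath P ms)) = cl c P ms"
proof (induction ms arbitrary: P)
  case Nil then show ?case by (simp add: vpath_def path_arcs_def)
next
  case (Cons m ms)
  define P' where "P' = P + (if m then 1 else k)"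
  have vp: "vpath P (m # ms) = P mod n # vpath P' ms" by (simp add: vpath_def P'_def)
  have hd: "hd (vpath P' ms) = P' mod n" by (simp add: vpath_def hd_map)
  have ne: "vpath P' ms \<noteq> []" by (simp add: vpath_def)
  have g: "Gam c (P mod n, P' mod n) = (if m then c ((P div k) mod a) (P mod k) else (P div k) mod a + 1)"
  proof (cases m)
    case True
    have "P' mod n = (P mod n + 1) mod n" using True by (simp add: P'_def mod_Suc_eq)
    then show ?thesis using True by (simp add: Gam_def mod_n_div mod_n_mod)
  next
    case False
    have "P' mod n \<noteq> (P mod n + 1) mod n" using False down_ne by (simp add: P'_def)
    then show ?thesis using False by (simp add: Gam_def mod_n_div)
  qed
  show ?case using vp hd ne g Cons.IH[of P'] by (simp add: path_arcs_Cons P'_def)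
qed

lemma cl_app: "cl c P (xs @ ys) = cl c P xs @ cl c (P + nR xs + nD xs * k) ys"
  by (induction xs arbitrary: P) (auto simp: algebra_simps)

definition rowsL :: "nat \<Rightarrow> nat \<Rightarrow> nat list" where
  "rowsL b t = map (\<lambda>x. x mod a + 1) [b..<b+t]"

lemma rowsL_Suc: "rowsL b (Suc t) = (b mod a + 1) # rowsL (Suc b) t"
  unfolding rowsL_def by (simp add: upt_conv_Cons del: upt_Suc)

lemma cl_downs: "cl c P (replicate t False) = rowsL (P div k) t"
proof (induction t arbitrary: P)
  case 0 then show ?case by (simp add: rowsL_def)
next
  case (Suc t)
  have "(P + k) div k = Suc (P div k)" using div_add_self2[of k P] kn(4) by simp
  then show ?case using Suc.IH[of "P+k"] by (simp add: rowsL_Suc)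
qed

lemma cl_rights: "P mod k + t \<le> k \<Longrightarrow>
   cl c P (replicate t True) = map (c ((P div k) mod a)) [P mod k..<P mod k + t]"
proof (induction t arbitrary: P)
  case 0 then show ?case by simp
next
  case (Suc t)
  show ?case
  proof (cases t)
    case 0 then show ?thesis by simp
  next
    case (Suc t')
    then have lt: "Suc (P mod k) < k" using Suc.prems by simp
    then have d: "Suc P div k = P div k" and m: "Suc P mod k = Suc (P mod k)"
      by (simp_all add: div_Suc mod_Suc)
    have "cl c (P+1) (replicate t True) = map (c ((P div k) mod a)) [Suc (P mod k)..<Suc (P mod k) + t]"
      using Suc.IH[of "P+1"] Suc.prems d m by simp
    then show ?thesis by (simp add: upt_conv_Cons del: upt_Suc)
  qed
qed

lemma div_add_k: "(P + t * k) div k = P div k + t" using kn by simp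
lemma mod_add_k: "(P + t * k) mod k = P mod k" by simp

lemma rowsL_distinct:
  assumes t: "t \<le> a" shows "distinct (rowsL b t)"
proof -
  have "inj_on (\<lambda>x. x mod a + 1) {b..<b+t}"
  proof (rule inj_onI)
    fix x y assume xy: "x \<in> {b..<b+t}" "y \<in> {b..<b+t}" "x mod a + 1 = y mod a + 1"
    then have "(b + (x-b)) mod a = (b + (y-b)) mod a" by simp
    then have "(x-b) mod a = (y-b) mod a" by (simp add: nat_mod_eq_iff)
    moreover have "x - b < a" "y - b < a" using xy t by auto
    ultimately have "x - b = y - b" by simp
    then have "x - b = y - b" by simp
    moreover have "b \<le> x" "b \<le> y" using xy by auto
    ultimately show "x = y" by arith
  qed
  then show ?thesis unfolding rowsL_def distinct_map by simp
qed

lemma rowsL_mem: "t \<le> a \<Longrightarrow> ((b + m) mod a + 1 \<in> set (rowsL b t)) \<longleftrightarrow> m mod a < t"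
proof
  assume t: "t \<le> a"
  {
    assume "(b + m) mod a + 1 \<in> set (rowsL b t)"
    then obtain x where x: "x \<in> {b..<b+t}" "(b+m) mod a = x mod a" unfolding rowsL_def by auto
    then have "(b + m) mod a = (b + (x - b)) mod a" by simp
    then have "m mod a = (x - b) mod a" by (simp add: nat_mod_eq_iff)
    moreover have "x - b < a" "x - b < t" using x t by auto
    ultimately show "m mod a < t" by simp
  }
  {
    assume mt: "m mod a < t"
    have "(b + m) mod a = (b + m mod a) mod a" by (simp add: mod_add_right_eq)
    moreover have "b + m mod a \<in> {b..<b+t}" using mt by simp
    ultimately show "(b + m) mod a + 1 \<in> set (rowsL b t)" unfolding rowsL_def by force
  }
qed

lemma rowsL_le: "x \<in> set (rowsL b t) \<Longrightarrow> 1 \<le> x \<and> x \<le> a"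
  unfolding rowsL_def using kn by (auto simp: Suc_le_eq)

lemma rowsL_add: "rowsL b (s + t) = rowsL b s @ rowsL (b + s) t"
  unfolding rowsL_def using upt_add_eq_append[of b "b+s" t] by (simp add: add.assoc)

end


lemma distinct_transfer:
  assumes "distinct ys" "set xs = set ys" "length xs = length ys"
  shows "distinct xs"
  by (metis assms card_distinct distinct_card)

context circ
begin

lemma cl_downs_app: "cl c P (replicate h False @ ys) = rowsL (P div k) h @ cl c (P + h*k) ys"
  by (simp add: cl_app cl_downs)

lemma cl_rights_app: "P mod k + t \<le> k \<Longrightarrow>
  cl c P (replicate t True @ ys) = map (c ((P div k) mod a)) [P mod k..<P mod k + t] @ cl c (P + t) ys"
  by (simp add: cl_app cl_rights)

lemma divk: "(r + X*k) div k = X" if "r < k" for r X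
  using div_add_k[of r X] that by simp
lemma modk: "(r + X*k) mod k = r" if "r < k" for r X
  using that by simp

lemma cl_wrap_tail:
  assumes W: "W < k"
  shows "cl c (X*k) (replicate h False @ replicate W True @ replicate t False)
    = rowsL X h @ map (c ((X+h) mod a)) [0..<W] @ rowsL (X+h) t"
proof -
  have d0: "(X*k) div k = X" using divk[of 0 X] kn by simp
  have e1: "X*k + h*k = 0 + (X+h)*k" by (simp add: algebra_simps)
  have d1: "(X*k + h*k) div k = X + h" "(X*k + h*k) mod k = 0"
    unfolding e1 using divk[of 0 "X+h"] modk[of 0 "X+h"] kn by simp_all
  have d2: "(X*k + h*k + W) div k = X + h"
  proof -
    have "X*k + h*k + W = W + (X+h)*k" by (simp add: algebra_simps)
    then show ?thesis using divk[OF W, of "X+h"] by (simp only:)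
  qed
  have "cl c (X*k + h*k) (replicate W True @ replicate t False)
      = map (c ((X+h) mod a)) [0..<W] @ rowsL (X+h) t"
    using cl_rights_app[of "X*k + h*k" W c "replicate t False"] d1 d2 W by (simp add: cl_downs)
  then show ?thesis using d0 by (simp add: cl_downs_app)
qed

lemma cl_wrap:
  assumes u: "u < n" and r0: "r0 = u mod k" and q0: "q0 = u div k" and W: "W < k"
  shows "cl c u (replicate j False @ replicate (k - r0) True @ replicate h False @ replicate W True @ replicate t False)
    = rowsL q0 j @ map (c ((q0+j) mod a)) [r0..<k] @ rowsL (q0+j+1) h
      @ map (c ((q0+j+1+h) mod a)) [0..<W] @ rowsL (q0+j+1+h) t"
proof -
  have rk: "r0 < k" using r0 kn by simp
  have e1: "u + j*k = r0 + (q0+j)*k" using r0 q0 by (simp add: algebra_simps)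
  have p1d: "(u + j*k) div k = q0 + j" and p1m: "(u + j*k) mod k = r0"
    unfolding e1 using divk[OF rk] modk[OF rk] by simp_all
  have p2: "u + j*k + (k - r0) = (q0+j+1)*k" using e1 rk by (simp add: algebra_simps)
  have t: "cl c ((q0+j+1)*k) (replicate h False @ replicate W True @ replicate t False)
    = rowsL (q0+j+1) h @ map (c ((q0+j+1+h) mod a)) [0..<W] @ rowsL (q0+j+1+h) t"
    using cl_wrap_tail[OF W, of c "q0+j+1" h t] by simp
  have "cl c (u + j*k) (replicate (k - r0) True @ replicate h False @ replicate W True @ replicate t False)
    = map (c ((q0+j) mod a)) [r0..<k] @ cl c ((q0+j+1)*k) (replicate h False @ replicate W True @ replicate t False)"
    using cl_rights_app[of "u + j*k" "k - r0" c] p1d p1m rk p2 by simp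
  then show ?thesis using t q0 by (simp add: cl_downs_app)
qed

lemma cl_nowrap:
  assumes u: "u < n" and r0: "r0 = u mod k" and q0: "q0 = u div k" and R: "r0 + R < k"
  shows "cl c u (replicate j False @ replicate R True @ replicate t False)
    = rowsL q0 j @ map (c ((q0+j) mod a)) [r0..<r0+R] @ rowsL (q0+j) t"
proof -
  have p1d: "(u + j*k) div k = q0 + j" using q0 div_add_k by simp
  have p1m: "(u + j*k) mod k = r0" using r0 by simp
  have p2d: "(u + j*k + R) div k = q0 + j"
  proof -
    have "u + j*k + R = (r0 + R) + (q0+j)*k" using r0 q0 by (simp add: algebra_simps)
    then have "(u + j*k + R) div k = ((r0 + R) + (q0+j)*k) div k" by (rule arg_cong)
    also have "\<dots> = (r0+R) div k + (q0+j)" by (rule div_add_k)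
    also have "\<dots> = q0+j" using R by simp
    finally show ?thesis .
  qed
  have e2: "cl c (u + j*k) (replicate R True @ replicate t False)
      = map (c ((q0+j) mod a)) [r0..<r0+R] @ rowsL (q0+j) t"
    using cl_rights_app[of "u + j*k" R c] p1d p1m R p2d by (simp add: cl_downs)
  show ?thesis using e2 q0 by (simp add: cl_downs_app)
qed

end


context circ
begin

definition sf :: "nat \<Rightarrow> nat" where "sf \<rho> = min \<rho> (k-2)"
definition cR :: "nat \<Rightarrow> nat \<Rightarrow> nat" where
  "cR \<rho> r = (if r = k-1 then \<rho>+1 else if r = sf \<rho> then (\<rho>+1) mod a + 1
      else if r < sf \<rho> then a+1+r else a+r)"

lemma sf_le: "sf \<rho> \<le> k - 2" by (simp add: sf_def)

lemma modle: "x mod a + 1 \<le> a" using kn(5) by (simp add: Suc_le_eq)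

lemma seg_set:
  assumes "r2 \<le> k-1" "x \<in> set (map (cR \<rho>) [r1..<r2])"
  shows "(x = (\<rho>+1) mod a + 1 \<and> r1 \<le> sf \<rho> \<and> sf \<rho> < r2) \<or> (a + r1 \<le> x \<and> x \<le> a + r2 \<and> a < x)"
proof -
  obtain r where r: "r1 \<le> r" "r < r2" "x = cR \<rho> r" using assms(2) by auto
  have "r \<noteq> k - 1" using r assms(1) by simp
  then show ?thesis using r sf_le[of \<rho>] by (auto simp: cR_def)
qed

lemma seg_distinct:
  assumes "r2 \<le> k-1" shows "distinct (map (cR \<rho>) [r1..<r2])"
proof -
  have "inj_on (cR \<rho>) {r1..<r2}"
  proof (rule inj_onI)
    fix r r' assume h: "r \<in> {r1..<r2}" "r' \<in> {r1..<r2}" "cR \<rho> r = cR \<rho> r'"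
    have ne: "r \<noteq> k-1" "r' \<noteq> k-1" using h assms by auto
    have m: "(\<rho>+1) mod a + 1 \<le> a" by (rule modle)
    show "r = r'" using h(3) ne m unfolding cR_def by (auto split: if_splits)
  qed
  then show ?thesis by (simp add: distinct_map)
qed

lemma rowsL_one: "rowsL b 1 = [b mod a + 1]" by (simp add: rowsL_def)

lemma rowsL_shift: "((q0 + m) mod a + 1) mod a + 1 = (q0 + (m+1)) mod a + 1"
  by (simp add: mod_Suc_eq)

lemma upt_last: assumes "r0 < k" shows "[r0..<k] = [r0..<k-1] @ [k-1]"
proof -
  have "r0 \<le> k-1" "Suc (k-1) = k" using assms by auto
  then show ?thesis by (metis upt_Suc_append)
qed

lemma DW:
  assumes u: "u < n" and r0: "r0 = u mod k" and q0: "q0 = u div k" and Q: "Q < a"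
    and jh: "j + h \<le> Q" and W: "W < r0"
    and C1: "r0 \<le> sf ((q0+j) mod a) \<Longrightarrow> Q < (j+1) mod a"
    and C2: "sf ((q0+j+1+h) mod a) < W \<Longrightarrow> Q < (j+h+2) mod a"
    and C3: "r0 \<le> sf ((q0+j) mod a) \<Longrightarrow> sf ((q0+j+1+h) mod a) < W \<Longrightarrow> (j+1) mod a \<noteq> (j+h+2) mod a"
  shows "distinct (cl cR u (replicate j False @ replicate (k - r0) True @ replicate h False
            @ replicate W True @ replicate (Q-j-h) False))"
proof -
  define \<rho>1 where "\<rho>1 = (q0+j) mod a"
  define \<rho>2 where "\<rho>2 = (q0+j+1+h) mod a"
  define B1 where "B1 = map (cR \<rho>1) [r0..<k-1]"
  define B2 where "B2 = map (cR \<rho>2) [0..<W]"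
  define Rw where "Rw = rowsL q0 (Q+1)"
  have rk: "r0 < k" using r0 kn by simp
  have Wk: "W < k" using W rk by simp
  have L: "cl cR u (replicate j False @ replicate (k - r0) True @ replicate h False
            @ replicate W True @ replicate (Q-j-h) False)
      = rowsL q0 j @ (B1 @ [(q0+j) mod a + 1]) @ rowsL (q0+j+1) h @ B2 @ rowsL (q0+j+1+h) (Q-j-h)"
    using cl_wrap[OF u r0 q0 Wk, of cR j h "Q-j-h"] upt_last[OF rk]
    by (simp add: B1_def B2_def \<rho>1_def \<rho>2_def cR_def)
  have Rw: "Rw = rowsL q0 j @ [(q0+j) mod a + 1] @ rowsL (q0+j+1) h @ rowsL (q0+j+1+h) (Q-j-h)"
  proof -
    have "Q + 1 = j + (1 + (h + (Q-j-h)))" using jh by simp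
    then show ?thesis unfolding Rw_def by (simp only: rowsL_add rowsL_one)
  qed
  have d1: "distinct Rw" unfolding Rw_def using Q by (intro rowsL_distinct) simp
  have d2: "distinct B1" unfolding B1_def by (rule seg_distinct) simp
  have d3: "distinct B2" unfolding B2_def by (rule seg_distinct) (use W rk in simp)
  have Rw_le: "x \<in> set Rw \<Longrightarrow> x \<le> a" for x unfolding Rw_def using rowsL_le by blast
  have memRw: "(q0 + m) mod a + 1 \<in> set Rw \<longleftrightarrow> m mod a < Q + 1" for m
    unfolding Rw_def using Q by (intro rowsL_mem) simp
  have B1s: "x \<in> set B1 \<Longrightarrow> (x = (q0 + (j+1)) mod a + 1 \<and> r0 \<le> sf \<rho>1) \<or> (a + r0 \<le> x \<and> a < x)" for x
    using seg_set[of "k-1" x \<rho>1 r0] rowsL_shift[of q0 j] unfolding B1_def \<rho>1_def by auto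
  have B2s: "x \<in> set B2 \<Longrightarrow> (x = (q0 + (j+h+2)) mod a + 1 \<and> sf \<rho>2 < W) \<or> (x \<le> a + W \<and> a < x)" for x
  proof -
    assume x: "x \<in> set B2"
    have e: "((q0+j+1+h) mod a + 1) mod a + 1 = (q0 + (j+h+2)) mod a + 1"
      using rowsL_shift[of q0 "j+1+h"] by (simp add: add.assoc add.commute add.left_commute)
    show ?thesis using seg_set[of W x \<rho>2 0] x W rk e unfolding B2_def \<rho>2_def by auto
  qed
  have i1: "set Rw \<inter> set B1 = {}"
  proof (rule ccontr)
    assume "set Rw \<inter> set B1 \<noteq> {}"
    then obtain x where x: "x \<in> set Rw" "x \<in> set B1" by blast
    from B1s[OF x(2)] show False
    proof
      assume h: "x = (q0 + (j+1)) mod a + 1 \<and> r0 \<le> sf \<rho>1"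
      then have "(j+1) mod a < Q + 1" using memRw[of "j+1"] x(1) by simp
      then show False using C1 h unfolding \<rho>1_def by simp
    next
      assume "a + r0 \<le> x \<and> a < x" then show False using Rw_le[OF x(1)] by simp
    qed
  qed
  have i2: "set Rw \<inter> set B2 = {}"
  proof (rule ccontr)
    assume "set Rw \<inter> set B2 \<noteq> {}"
    then obtain x where x: "x \<in> set Rw" "x \<in> set B2" by blast
    from B2s[OF x(2)] show False
    proof
      assume h: "x = (q0 + (j+h+2)) mod a + 1 \<and> sf \<rho>2 < W"
      then have "(j+h+2) mod a < Q + 1" using memRw[of "j+h+2"] x(1) by simp
      then show False using C2 h unfolding \<rho>2_def by simp
    next
      assume "x \<le> a + W \<and> a < x" then show False using Rw_le[OF x(1)] by simp
    qed
  qed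
  have i3: "set B1 \<inter> set B2 = {}"
  proof (rule ccontr)
    assume "set B1 \<inter> set B2 \<noteq> {}"
    then obtain x where x: "x \<in> set B1" "x \<in> set B2" by blast
    have ma: "y mod a + 1 \<le> a" for y by (rule modle)
    from B1s[OF x(1)] B2s[OF x(2)] show False
    proof (elim disjE)
      assume h1: "x = (q0 + (j+1)) mod a + 1 \<and> r0 \<le> sf \<rho>1"
        and h2: "x = (q0 + (j+h+2)) mod a + 1 \<and> sf \<rho>2 < W"
      then have "(q0 + (j+1)) mod a = (q0 + (j+h+2)) mod a" by simp
      then have "(j+1) mod a = (j+h+2) mod a" by (simp add: nat_mod_eq_iff)
      then show False using C3 h1 h2 unfolding \<rho>1_def \<rho>2_def by simp
    qed (use W modle[of "q0 + (j+1)"] modle[of "q0 + (j+h+2)"] in auto)+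
  qed
  have dall: "distinct (Rw @ B1 @ B2)" using d1 d2 d3 i1 i2 i3 by auto
  show ?thesis unfolding L
    by (rule distinct_transfer[OF dall]) (auto simp: Rw)
qed

lemma DN:
  assumes u: "u < n" and r0: "r0 = u mod k" and q0: "q0 = u div k" and Q: "Q < a"
    and R: "r0 + R < k" and j: "j \<le> Q"
    and C: "r0 \<le> sf ((q0+j) mod a) \<Longrightarrow> sf ((q0+j) mod a) < r0 + R \<Longrightarrow> Q \<le> (j+1) mod a"
  shows "distinct (cl cR u (replicate j False @ replicate R True @ replicate (Q-j) False))"
proof -
  define \<rho> where "\<rho> = (q0+j) mod a"
  define B where "B = map (cR \<rho>) [r0..<r0+R]"
  define Rw where "Rw = rowsL q0 Q"
  have L: "cl cR u (replicate j False @ replicate R True @ replicate (Q-j) False)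
      = rowsL q0 j @ B @ rowsL (q0+j) (Q-j)"
    using cl_nowrap[OF u r0 q0 R, of cR j "Q-j"] by (simp add: B_def \<rho>_def)
  have Rw: "Rw = rowsL q0 j @ rowsL (q0+j) (Q-j)"
  proof -
    have "Q = j + (Q-j)" using j by simp
    then show ?thesis unfolding Rw_def by (metis rowsL_add)
  qed
  have d1: "distinct Rw" unfolding Rw_def using Q by (intro rowsL_distinct) simp
  have d2: "distinct B" unfolding B_def by (rule seg_distinct) (use R in simp)
  have Rw_le: "x \<in> set Rw \<Longrightarrow> x \<le> a" for x unfolding Rw_def using rowsL_le by blast
  have memRw: "(q0 + m) mod a + 1 \<in> set Rw \<longleftrightarrow> m mod a < Q" for m
    unfolding Rw_def using Q by (intro rowsL_mem) simp
  have i1: "set Rw \<inter> set B = {}"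
  proof (rule ccontr)
    assume "set Rw \<inter> set B \<noteq> {}"
    then obtain x where x: "x \<in> set Rw" "x \<in> set B" by blast
    have "(x = (\<rho>+1) mod a + 1 \<and> r0 \<le> sf \<rho> \<and> sf \<rho> < r0+R) \<or> (a + r0 \<le> x \<and> x \<le> a + (r0+R) \<and> a < x)"
      using seg_set[of "r0+R" x \<rho> r0] x(2) R unfolding B_def by simp
    then show False
    proof
      assume h: "x = (\<rho>+1) mod a + 1 \<and> r0 \<le> sf \<rho> \<and> sf \<rho> < r0+R"
      then have "x = (q0 + (j+1)) mod a + 1" using rowsL_shift[of q0 j] unfolding \<rho>_def by simp
      then have "(j+1) mod a < Q" using memRw[of "j+1"] x(1) by simp
      then show False using C h unfolding \<rho>_def by simp
    next
      assume "a + r0 \<le> x \<and> x \<le> a + (r0+R) \<and> a < x" then show False using Rw_le[OF x(1)] by simp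
    qed
  qed
  have dall: "distinct (Rw @ B)" using d1 d2 i1 by auto
  show ?thesis unfolding L
    by (rule distinct_transfer[OF dall]) (auto simp: Rw)
qed

lemma EXW:
  assumes u: "u < n" and r0: "r0 = u mod k" and q0: "q0 = u div k" and Q: "Q < a"
    and R: "R < k" "k \<le> r0 + R" and jh: "j + h \<le> Q"
    and C1: "r0 \<le> sf ((q0+j) mod a) \<Longrightarrow> Q < (j+1) mod a"
    and C2: "sf ((q0+j+1+h) mod a) < r0 + R - k \<Longrightarrow> Q < (j+h+2) mod a"
    and C3: "r0 \<le> sf ((q0+j) mod a) \<Longrightarrow> sf ((q0+j+1+h) mod a) < r0 + R - k \<Longrightarrow> (j+1) mod a \<noteq> (j+h+2) mod a"
  shows "\<exists>ms. nR ms = R \<and> nD ms = Q \<and> distinct (cl cR u ms)"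
proof -
  have rk: "r0 < k" using r0 kn by simp
  have W: "r0 + R - k < r0" using R by simp
  show ?thesis
    apply (rule exI[of _ "replicate j False @ replicate (k - r0) True @ replicate h False
            @ replicate (r0 + R - k) True @ replicate (Q-j-h) False"])
    using DW[OF u r0 q0 Q jh W C1 C2 C3] rk R jh by simp
qed

lemma EXN:
  assumes u: "u < n" and r0: "r0 = u mod k" and q0: "q0 = u div k" and Q: "Q < a"
    and R: "r0 + R < k"
  shows "\<exists>ms. nR ms = R \<and> nD ms = Q \<and> distinct (cl cR u ms)"
proof -
  have C: "Q \<le> (Q - 1 + 1) mod a" using Q by (cases Q) auto
  show ?thesis
    apply (rule exI[of _ "replicate (Q-1) False @ replicate R True @ replicate (Q-(Q-1)) False"])
    using DN[OF u r0 q0 Q R, of "Q-1"] C by simp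
qed

end


context circ
begin

lemma sf_id: "x \<le> k - 2 \<Longrightarrow> sf x = x" by (simp add: sf_def)
lemma mod_plus_a: "x < a \<Longrightarrow> (x + a) mod a = x" by simp

lemma EXmain:
  assumes a3: "3 \<le> a" and ak: "k - 1 \<le> a" and u: "u < n" and Q: "Q < a" and R: "R < k"
  shows "\<exists>ms. nR ms = R \<and> nD ms = Q \<and> distinct (cl cR u ms)"
proof -
  define r0 where "r0 = u mod k"
  define q0 where "q0 = u div k"
  have rk: "r0 < k" unfolding r0_def using kn by simp
  have qa: "q0 < a" unfolding q0_def using u kn
    by (metis less_mult_imp_div_less)
  show ?thesis
  proof (cases "r0 + R < k")
    case True
    then show ?thesis using EXN[OF u r0_def q0_def Q] by blast
  next
    case False
    then have wr: "k \<le> r0 + R" by simp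
    define W where "W = r0 + R - k"
    define g where "g = r0 - 2"
    have r01: "1 \<le> r0" using wr R by simp
    have Wr: "W < r0" "W \<le> g + 1" using wr R unfolding W_def g_def by auto
    have gk: "g + 1 \<le> k - 2" using rk k3 unfolding g_def by auto
    have ga: "g + 1 < a" using gk ak kn by linarith
    have sfg: "sf g = g" "sf (g+1) = g+1" using gk by (simp_all add: sf_id)
    show ?thesis
    proof (cases "Q + 3 \<le> a")
      case True
      have m1: "(Q+1) mod a = Q+1" "(Q+0+2) mod a = Q+2" using True by simp_all
      show ?thesis
        by (rule EXW[OF u r0_def q0_def Q R wr, of Q 0]) (use m1 in auto)
    next
      case False
      then have Qa2: "a \<le> Q + 2" by simp
      define j where "j = (g + a - q0) mod a"
      have ja: "j < a" unfolding j_def using kn by simp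
      have qj: "(q0 + j) mod a = g"
      proof -
        have "(q0 + j) mod a = (q0 + (g + a - q0)) mod a" unfolding j_def by (simp add: mod_add_right_eq)
        also have "q0 + (g + a - q0) = g + a" using qa by simp
        finally show ?thesis using ga by simp
      qed
      have qj1: "(q0 + j + 1 + 0) mod a = g + 1"
      proof -
        have "(q0 + j + 1) mod a = ((q0 + j) mod a + 1) mod a" by (simp add: mod_Suc_eq)
        then show ?thesis using qj ga by simp
      qed
      show ?thesis
      proof (cases "Q = a - 1 \<or> j \<noteq> a - 1")
        case True
        then have jQ: "j + 0 \<le> Q" using ja Qa2 Q by auto
        show ?thesis
          by (rule EXW[OF u r0_def q0_def Q R wr jQ]) (use qj qj1 sfg Wr r01 g_def W_def in auto)
      next
        case False
        then have Qv: "Q = a - 2" and jv: "j = a - 1" using Qa2 Q by auto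
        have q0g: "q0 = g + 1"
        proof (cases "q0 \<le> g")
          case True
          have e: "g + a - q0 = (g - q0) + a" using True by simp
          have "j = ((g - q0) + a) mod a" unfolding j_def by (simp only: e)
          also have "\<dots> = g - q0" using ga by (intro mod_plus_a) simp
          finally have "j = g - q0" .
          then show ?thesis using jv ga by simp
        next
          case False
          then have "g + a - q0 < a" using kn(5) by arith
          then have "j = g + a - q0" unfolding j_def by (simp only: mod_less)
          then show ?thesis using jv False qa by simp
        qed
        show ?thesis
        proof (cases "W \<le> g")
          case True
          have jQ: "Q + 0 \<le> Q" by simp
          have m1: "(Q+1) mod a = a - 1" using Qv a3 by simp
          have m2: "(q0 + Q + 1 + 0) mod a = g"
          proof -
            have "q0 + Q + 1 + 0 = g + a" using q0g Qv a3 by simp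
            then show ?thesis using ga by simp
          qed
          show ?thesis
            by (rule EXW[OF u r0_def q0_def Q R wr jQ]) (use m1 m2 sfg True Qv a3 W_def in auto)
        next
          case False
          then have Wv: "W = r0 - 1" and r02: "2 \<le> r0" using Wr unfolding g_def by auto
          show ?thesis
          proof (cases "r0 < a")
            case True
            have jQ: "0 + 0 \<le> Q" by simp
            have m1: "(q0 + 0) mod a = r0 - 1" using q0g qa r02 unfolding g_def by simp
            have m2: "(q0 + 0 + 1 + 0) mod a = r0" using q0g True r02 unfolding g_def by simp
            have s1: "sf (r0 - 1) = r0 - 1" using rk by (simp add: sf_id)
            have s2: "r0 - 1 \<le> sf r0" using rk unfolding sf_def by simp
            show ?thesis
              by (rule EXW[OF u r0_def q0_def Q R wr jQ]) (use m1 m2 s1 s2 Wv W_def r02 in auto)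
          next
            case False
            then have r0a: "r0 = a" and ka: "k = a + 1" using rk ak by auto
            have q0v: "q0 = a - 1" using q0g r0a r02 unfolding g_def by simp
            have jQ: "0 + (a - 3) \<le> Q" using Qv by simp
            have m1: "(q0 + 0) mod a = a - 1" using q0v qa by simp
            have m2: "(q0 + 0 + 1 + (a-3)) mod a = a - 3"
            proof -
              have e: "q0 + 0 + 1 + (a-3) = (a - 3) + a" using q0v a3 by simp
              show ?thesis unfolding e using a3 by (intro mod_plus_a) simp
            qed
            have m3: "(0 + (a-3) + 2) mod a = a - 1" using a3 by simp
            have s1: "sf (a-1) = a - 1" by (rule sf_id) (use ka in simp)
            have s2: "sf (a-3) = a - 3" by (rule sf_id) (use ka in simp)
            have c1: "r0 \<le> sf ((q0+0) mod a) \<Longrightarrow> Q < (0+1) mod a" using m1 s1 r0a a3 by simp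
            have c2: "sf ((q0+0+1+(a-3)) mod a) < r0+R-k \<Longrightarrow> Q < (0+(a-3)+2) mod a"
              using m3 Qv a3 by simp
            have c3: "r0 \<le> sf ((q0+0) mod a) \<Longrightarrow> sf ((q0+0+1+(a-3)) mod a) < r0+R-k
                \<Longrightarrow> (0+1) mod a \<noteq> (0+(a-3)+2) mod a" using m1 s1 r0a a3 by simp
            show ?thesis by (rule EXW[OF u r0_def q0_def Q R wr jQ c1 c2 c3])
          qed
        qed
      qed
    qed
  qed
qed

end


context circ
begin

lemma cR_bound: "\<rho> < a \<Longrightarrow> r < k \<Longrightarrow> 1 \<le> cR \<rho> r \<and> cR \<rho> r \<le> a + k - 2"
  using modle[of "\<rho>+1"] sf_le[of \<rho>] k3 unfolding cR_def by auto

lemma upper: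
  assumes col: "\<And>\<rho> r. \<rho> < a \<Longrightarrow> r < k \<Longrightarrow> 1 \<le> c \<rho> r \<and> c \<rho> r \<le> a + k - 2"
    and ex: "\<And>u v. u < n \<Longrightarrow> v < n \<Longrightarrow> u \<noteq> v \<Longrightarrow>
        \<exists>ms. nR ms = Rof u v \<and> nD ms = Qof u v \<and> distinct (cl c u ms)"
  shows "is_colouring AA (a+k-2) (Gam c) \<and> strongly_rainbow_connected {..<n} AA (Gam c)"
proof
  show "is_colouring AA (a+k-2) (Gam c)" unfolding is_colouring_def
  proof
    fix e assume e: "e \<in> AA"
    obtain i j where ij: "e = (i,j)" by force
    have i: "i < n" using e ij arcs by auto
    have "i div k < a" using i kn by (metis less_mult_imp_div_less)
    moreover have "i mod k < k" using kn by simp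
    ultimately show "Gam c e \<in> {1..a+k-2}" using col[of "i div k" "i mod k"] k3
      unfolding ij Gam_def by auto
  qed
  show "strongly_rainbow_connected {..<n} AA (Gam c)" unfolding strongly_rainbow_connected_def
  proof (intro ballI impI)
    fix x y assume x: "x \<in> {..<n}" and y: "y \<in> {..<n}" and xy: "x \<noteq> y"
    from ex[of x y] x y xy obtain ms where ms: "nR ms = Rof x y" "nD ms = Qof x y"
      "distinct (cl c x ms)" by auto
    have p: "is_dipath AA (vpath x ms) x y" "length (vpath x ms) - 1 = Qof x y + Rof x y"
      using vpath_dipath[of x y ms] x y ms by auto
    have d: "dist_di AA x y = Qof x y + Rof x y" using dist_eq x y by auto
    have r: "rainbow (Gam c) (vpath x ms)" unfolding rainbow_def colours_vpath using ms by simp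
    show "\<exists>p. is_dipath AA p x y \<and> length p - 1 = dist_di AA x y \<and> rainbow (Gam c) p"
      using p d r by auto
  qed
qed

lemma lower:
  assumes col: "is_colouring AA m \<Gamma>" and rc: "rainbow_connected {..<n} AA \<Gamma>"
  shows "a + k - 2 \<le> m"
proof -
  have n1: "1 < n" "0 < n" using kn(1,2,3) by linarith+
  have "\<exists>p. is_dipath AA p 1 0 \<and> rainbow \<Gamma> p"
  proof -
    have m: "(1::nat) \<in> {..<n}" "(0::nat) \<in> {..<n}" "(1::nat) \<noteq> 0" using n1 by auto
    show ?thesis using rc[unfolded rainbow_connected_def, rule_format, OF m] .
  qed
  then obtain p where p: "is_dipath AA p 1 0" "rainbow \<Gamma> p" by blast
  have e: "n - 1 = (k-1) + (a-1)*k" using kn by (cases a) auto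
  have d: "(0 + n - 1) mod n = n - 1" using n1 by simp
  have Q: "Qof 1 0 = a - 1" unfolding Qof_def d e using divk[of "k-1" "a-1"] kn by simp
  have R: "Rof 1 0 = k - 1" unfolding Rof_def d e using modk[of "k-1" "a-1"] kn by simp
  have lb: "a - 1 + (k - 1) \<le> length p - 1" using dipath_lb[OF p(1)] n1 Q R by simp
  have arcsA: "set (path_arcs p) \<subseteq> AA" using p(1) unfolding is_dipath_def by simp
  have sub: "set (map \<Gamma> (path_arcs p)) \<subseteq> {1..m}" using arcsA col unfolding is_colouring_def by auto
  have dist: "distinct (map \<Gamma> (path_arcs p))" using p(2) unfolding rainbow_def .
  have "length (path_arcs p) = card (set (map \<Gamma> (path_arcs p)))"
    using distinct_card[OF dist] by simp
  also have "\<dots> \<le> card {1..m}" by (rule card_mono[OF _ sub]) simp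
  finally have "length (path_arcs p) \<le> m" by simp
  moreover have "length (path_arcs p) = length p - 1" by (simp add: path_arcs_def)
  ultimately show ?thesis using lb kn by linarith
qed

end


definition cS :: "nat \<Rightarrow> nat \<Rightarrow> nat" where
  "cS \<rho> r = (if \<rho> = 0 then [1,3,1] ! r else [3,2,3] ! r)"

lemma replicate_2: "replicate 2 x = [x, x]" by (simp add: numeral_2_eq_2)

context circ
begin

lemma special_D:
  assumes k: "k = 3" and a: "a = 2" and u: "u < n" and v: "v < n" and uv: "u \<noteq> v"
  shows "distinct (cl cS u (replicate (Rof u v) True @ replicate (Qof u v) False))
       \<or> distinct (cl cS u (replicate (Qof u v) False @ replicate (Rof u v) True))"
proof -
  have "u \<in> {0,1,2,3,4,5}" "v \<in> {0,1,2,3,4,5}" using u v k a by auto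
  moreover have c32: "circ 3 2" by unfold_locales simp_all
  ultimately show ?thesis using uv k a
    by (auto simp: circ.Qof_def[OF c32] circ.Rof_def[OF c32] circ.cl.simps[OF c32] cS_def replicate_2)
qed

lemma special_ex:
  assumes k: "k = 3" and a: "a = 2" and u: "u < n" and v: "v < n" and uv: "u \<noteq> v"
  shows "\<exists>ms. nR ms = Rof u v \<and> nD ms = Qof u v \<and> distinct (cl cS u ms)"
proof -
  from special_D[OF assms] show ?thesis
  proof
    assume h: "distinct (cl cS u (replicate (Rof u v) True @ replicate (Qof u v) False))"
    show ?thesis by (rule exI[of _ "replicate (Rof u v) True @ replicate (Qof u v) False"]) (simp add: h)
  next
    assume h: "distinct (cl cS u (replicate (Qof u v) False @ replicate (Rof u v) True))"
    show ?thesis by (rule exI[of _ "replicate (Qof u v) False @ replicate (Rof u v) True"]) (simp add: h)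
  qed
qed

lemma cS_bound: "k = 3 \<Longrightarrow> a = 2 \<Longrightarrow> \<rho> < a \<Longrightarrow> r < k \<Longrightarrow> 1 \<le> cS \<rho> r \<and> cS \<rho> r \<le> a + k - 2"
  unfolding cS_def by (auto simp: less_Suc_eq numeral_3_eq_3)

lemma exists_colouring:
  assumes ak: "k - 1 \<le> a"
  shows "\<exists>\<Gamma>. is_colouring AA (a+k-2) \<Gamma> \<and> strongly_rainbow_connected {..<n} AA \<Gamma>"
proof (cases "a = 2")
  case True
  then have k: "k = 3" using ak k3 by simp
  have "is_colouring AA (a+k-2) (Gam cS) \<and> strongly_rainbow_connected {..<n} AA (Gam cS)"
    by (rule upper) (use cS_bound[OF k True] special_ex[OF k True] in auto)
  then show ?thesis by blast
next
  case False
  then have a3: "3 \<le> a" using a2 by simp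
  have "is_colouring AA (a+k-2) (Gam cR) \<and> strongly_rainbow_connected {..<n} AA (Gam cR)"
    by (rule upper) (use cR_bound EXmain[OF a3 ak _ Qa Rk] in auto)
  then show ?thesis by blast
qed

lemma src_rc: "strongly_rainbow_connected V A \<Gamma> \<Longrightarrow> rainbow_connected V A \<Gamma>"
  unfolding strongly_rainbow_connected_def rainbow_connected_def by blast

end

theorem theorem11:
  fixes k a n :: nat
  assumes "2 \<le> k - 1" and "k - 1 \<le> a" and "n = a * k"
  shows "src_star (circulant_verts n) (circulant_arcs n {1, k}) = a + k - 2
       \<and> rc_star (circulant_verts n) (circulant_arcs n {1, k}) = a + k - 2"
proof -
  have k3: "3 \<le> k" and a2: "2 \<le> a" using assms by auto
  interpret C: circ k a using k3 a2 by unfold_locales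
  have V: "circulant_verts n = {..<a*k}" by (simp add: circulant_verts_def assms(3))
  have A: "circulant_arcs n {1,k} = C.AA" by (simp add: C.AA_def assms(3))
  obtain \<Gamma> where G: "is_colouring C.AA (a+k-2) \<Gamma>" "strongly_rainbow_connected {..<a*k} C.AA \<Gamma>"
    using C.exists_colouring[OF assms(2)] by blast
  have s: "src_star {..<a*k} C.AA = a + k - 2" unfolding src_star_def
  proof (rule Least_equality)
    show "\<exists>\<Gamma>. is_colouring C.AA (a+k-2) \<Gamma> \<and> strongly_rainbow_connected {..<a*k} C.AA \<Gamma>"
      using G by blast
  next
    fix m assume "\<exists>\<Gamma>. is_colouring C.AA m \<Gamma> \<and> strongly_rainbow_connected {..<a*k} C.AA \<Gamma>"
    then obtain \<Gamma>' where "is_colouring C.AA m \<Gamma>'" "strongly_rainbow_connected {..<a*k} C.AA \<Gamma>'" by blast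
    then show "a + k - 2 \<le> m" using C.lower C.src_rc by blast
  qed
  have r: "rc_star {..<a*k} C.AA = a + k - 2" unfolding rc_star_def
  proof (rule Least_equality)
    show "\<exists>\<Gamma>. is_colouring C.AA (a+k-2) \<Gamma> \<and> rainbow_connected {..<a*k} C.AA \<Gamma>"
      using G C.src_rc by blast
  next
    fix m assume "\<exists>\<Gamma>. is_colouring C.AA m \<Gamma> \<and> rainbow_connected {..<a*k} C.AA \<Gamma>"
    then obtain \<Gamma>' where "is_colouring C.AA m \<Gamma>'" "rainbow_connected {..<a*k} C.AA \<Gamma>'" by blast
    then show "a + k - 2 \<le> m" using C.lower by blast
  qed
  show ?thesis using s r V A by simp
qed


end
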